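(* Let $\mathcal{M}\subseteq\mathbb{S}^n$. If $\mathcal{S}(\mathcal{M})$ is rank-one generated, then for all $B\in\mathbb{S}^n$, $$\mathrm{conv}\left(\{X\in\mathbb{S}^n:\ \langle M,X\rangle\ge0\ \forall M\in\mathcal{M},\ \langle B,X\rangle=1,\ X\succeq0,\ \mathrm{rank}(X)\le2\}\right)=\{X\in\mathbb{S}^n:\ \langle M,X\rangle\ge0\ \forall M\in\mathcal{M},\ \langle B,X\rangle=1,\ X\succeq0\}.$$ In particular, when $\mathcal{S}(\mathcal{M})$ is rank-one generated and $\mathcal{M}=\{M_1,\dots,M_m\}$, for any $M_0\in\mathbb{S}^n$ there exists a sequence of rank-two feasible solutions approaching the optimal value of $\inf\{\langle M_0,X\rangle: X\succeq0,\ \langle M_i,X\rangle\ge0\ \forall i\in\{1,\dots,m\},\ X_{1,1}=1\}$.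
   Context: $\mathbb{S}^n$ denotes real symmetric $n\times n$ matrices with $\langle A,B\rangle=\mathrm{tr}(AB)$, $\mathbb{S}^n_+$ the PSD cone, $X\succeq0$ means $X$ is PSD. For $\mathcal{M}\subseteq\mathbb{S}^n$, $\mathcal{S}(\mathcal{M})=\{X\in\mathbb{S}^n_+:\langle M,X\rangle\ge0\ \forall M\in\mathcal{M}\}$. A closed convex cone $\mathcal{S}\subseteq\mathbb{S}^n_+$ is rank-one generated (ROG) if $\mathcal{S}=\mathrm{conv}(\mathcal{S}\cap\{xx^\top:x\in\mathbb{R}^n\})$. *)

theory Defs
  imports "HOL-Analysis.Analysis"
begin

definition sym_mat :: "real^'n^'n \<Rightarrow> bool" where
  "sym_mat A \<longleftrightarrow> transpose A = A"

definition frob :: "real^'n^'n \<Rightarrow> real^'n^'n \<Rightarrow> real" where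
  "frob A B = trace (A ** B)"

definition psd :: "real^'n^'n \<Rightarrow> bool" where
  "psd A \<longleftrightarrow> sym_mat A \<and> (\<forall>x. 0 \<le> x \<bullet> (A *v x))"

definition outer :: "real^'n \<Rightarrow> real^'n^'n" where
  "outer x = (\<chi> i j. x$i * x$j)"

definition SM :: "(real^'n^'n) set \<Rightarrow> (real^'n^'n) set" where
  "SM Ms = {X. psd X \<and> (\<forall>M\<in>Ms. 0 \<le> frob M X)}"

definition ROG :: "(real^'n^'n) set \<Rightarrow> bool" where
  "ROG S \<longleftrightarrow> closed S \<and> convex S \<and> cone S \<and> S \<subseteq> {X. psd X} \<and>
     S = convex hull (S \<inter> range outer)"

end

theory Submission
  imports Defs
begin


lemma frob_expand: "frob A X = (\<Sum>i\<in>UNIV. \<Sum>k\<in>UNIV. A$i$k * X$k$i)"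
  by (simp add: frob_def trace_def matrix_matrix_mult_def)

lemma frob_add: "frob A (X + Y) = frob A X + frob A Y"
  by (simp add: frob_expand distrib_left sum.distrib)

lemma frob_scale: "frob A (c *\<^sub>R X) = c * frob A X"
  by (simp add: frob_expand sum_distrib_left mult_ac)

lemma frob_zero: "frob A 0 = 0"
  by (simp add: frob_expand)

lemma frob_sum: "finite I \<Longrightarrow> frob A (\<Sum>k\<in>I. f k) = (\<Sum>k\<in>I. frob A (f k))"
  by (induction I rule: finite_induct) (auto simp: frob_zero frob_add)

lemma transpose_add2: "transpose (X + Y) = transpose X + transpose (Y::real^'n^'n)"
  by (simp add: transpose_def vec_eq_iff)

lemma psd_add: "psd X \<Longrightarrow> psd Y \<Longrightarrow> psd (X + Y)"
  unfolding psd_def sym_mat_def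
  by (simp add: transpose_add2 matrix_vector_mult_add_rdistrib inner_add_right add_nonneg_nonneg)

lemma psd_scale: "psd X \<Longrightarrow> 0 \<le> c \<Longrightarrow> psd (c *\<^sub>R X)"
  unfolding psd_def sym_mat_def
  by (simp add: transpose_scalar flip: scaleR_matrix_vector_assoc)

lemma psd_zero: "psd (0::real^'n^'n)"
  unfolding psd_def sym_mat_def by (simp add: transpose_def vec_eq_iff)

lemma SM_add: "X \<in> SM Ms \<Longrightarrow> Y \<in> SM Ms \<Longrightarrow> X + Y \<in> SM Ms"
  unfolding SM_def by (auto simp: psd_add frob_add)

lemma SM_scale: "X \<in> SM Ms \<Longrightarrow> 0 \<le> c \<Longrightarrow> c *\<^sub>R X \<in> SM Ms"
  unfolding SM_def by (auto simp: psd_scale frob_scale)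

lemma SM_zero: "0 \<in> SM Ms"
  unfolding SM_def by (auto simp: psd_zero frob_zero)

lemma SM_sum: "finite I \<Longrightarrow> (\<forall>k\<in>I. f k \<in> SM Ms) \<Longrightarrow> (\<Sum>k\<in>I. f k) \<in> SM Ms"
  by (induction I rule: finite_induct) (auto simp: SM_zero SM_add)

lemma outer_mv: "(\<Sum>k\<in>J. c k *\<^sub>R outer (w k)) *v x = (\<Sum>k\<in>J. (c k * (w k \<bullet> x)) *\<^sub>R w k)"
  by (simp add: vec_eq_iff matrix_vector_mult_def outer_def inner_vec_def sum_distrib_left
      sum_distrib_right mult_ac sum.swap[of _ J])

lemma rank_Fs:
  fixes w :: "'a \<Rightarrow> real^'n"
  assumes "finite I"
  shows "rank (\<Sum>k\<in>I. c k *\<^sub>R outer (w k)) \<le> card {k\<in>I. c k \<noteq> 0}"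
proof -
  define J where "J = {k\<in>I. c k \<noteq> 0}"
  have fJ: "finite J" using assms by (simp add: J_def)
  have eq: "(\<Sum>k\<in>I. c k *\<^sub>R outer (w k)) = (\<Sum>k\<in>J. c k *\<^sub>R outer (w k))"
    by (rule sum.mono_neutral_right) (auto simp: J_def assms)
  have "range (\<lambda>x. (\<Sum>k\<in>J. c k *\<^sub>R outer (w k)) *v x) \<subseteq> span (w ` J)"
    unfolding outer_mv
    by (intro subsetI, clarify, rule span_sum, rule span_scale, rule span_base, auto)
  then have "dim (range (\<lambda>x. (\<Sum>k\<in>J. c k *\<^sub>R outer (w k)) *v x)) \<le> card (w ` J)"
    by (rule dim_le_card) (use fJ in auto)
  also have "\<dots> \<le> card J" using fJ by (rule card_image_le)
  finally show ?thesis by (simp add: eq rank_dim_range J_def)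
qed

lemma sum_upd: "finite I \<Longrightarrow> i \<in> I \<Longrightarrow>
   (\<Sum>k\<in>I. (f(i:=a)) k * g k) = (\<Sum>k\<in>I. f k * (g k::real)) - f i * g i + a * g i"
  by (simp add: sum.remove[of I i] sum.cong[of "I - {i}" "I - {i}" "\<lambda>k. (f(i:=a)) k * g k"])



lemma main_ind:
  fixes w :: "'a \<Rightarrow> real^'n" and B :: "real^'n^'n" and Ms :: "(real^'n^'n) set"
  assumes fin: "finite I" and wS: "\<forall>k\<in>I. outer (w k) \<in> SM Ms"
  defines "T \<equiv> {X. sym_mat X \<and> (\<forall>M\<in>Ms. 0 \<le> frob M X) \<and> frob B X = 1 \<and> psd X \<and> rank X \<le> 2}"
  shows "\<forall>c. card {k\<in>I. c k \<noteq> 0} = n \<longrightarrow> (\<forall>k. 0 \<le> c k) \<longrightarrow>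
     (\<Sum>k\<in>I. c k * frob B (outer (w k))) = 1 \<longrightarrow> (\<Sum>k\<in>I. c k *\<^sub>R outer (w k)) \<in> convex hull T"
proof (induction n rule: less_induct)
  case (less n)
  define l where "l k = frob B (outer (w k))" for k
  show ?case
  proof (intro allI impI)
    fix c :: "'a \<Rightarrow> real"
    assume n: "card {k\<in>I. c k \<noteq> 0} = n" and cnn: "\<forall>k. 0 \<le> c k"
      and V: "(\<Sum>k\<in>I. c k * frob B (outer (w k))) = 1"
    define supp where "supp = {k\<in>I. c k \<noteq> 0}"
    have fsupp: "finite supp" using fin by (simp add: supp_def)
    have V': "(\<Sum>k\<in>I. c k * l k) = 1" using V by (simp add: l_def)
    have step: "(\<Sum>k\<in>I. c k *\<^sub>R outer (w k)) \<in> convex hull T"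
      if lam: "0 < lam" "lam < 1" and c12: "\<forall>k. c k = lam * c1 k + (1 - lam) * c2 k"
        and nn1: "\<forall>k. 0 \<le> c1 k" and nn2: "\<forall>k. 0 \<le> c2 k"
        and V1: "(\<Sum>k\<in>I. c1 k * l k) = 1" and V2: "(\<Sum>k\<in>I. c2 k * l k) = 1"
        and s1: "card {k\<in>I. c1 k \<noteq> 0} < n" and s2: "card {k\<in>I. c2 k \<noteq> 0} < n"
      for lam c1 c2
    proof -
      have h1: "(\<Sum>k\<in>I. c1 k *\<^sub>R outer (w k)) \<in> convex hull T"
        using less.IH[OF s1] nn1 V1 by (simp add: l_def)
      have h2: "(\<Sum>k\<in>I. c2 k *\<^sub>R outer (w k)) \<in> convex hull T"
        using less.IH[OF s2] nn2 V2 by (simp add: l_def)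
      have "(\<Sum>k\<in>I. c k *\<^sub>R outer (w k)) = lam *\<^sub>R (\<Sum>k\<in>I. c1 k *\<^sub>R outer (w k))
          + (1 - lam) *\<^sub>R (\<Sum>k\<in>I. c2 k *\<^sub>R outer (w k))"
        by (simp add: c12 scaleR_sum_right sum.distrib[symmetric] scaleR_add_left)
      also have "\<dots> \<in> convex hull T"
        using convexD[OF convex_convex_hull h1 h2, of lam "1 - lam"] lam by simp
      finally show ?thesis .
    qed
    show "(\<Sum>k\<in>I. c k *\<^sub>R outer (w k)) \<in> convex hull T"
    proof (cases "n \<le> 2")
      case True
      let ?X = "\<Sum>k\<in>I. c k *\<^sub>R outer (w k)"
      have XS: "?X \<in> SM Ms" using fin wS cnn by (intro SM_sum) (auto intro: SM_scale)
      have "frob B ?X = 1" using V by (simp add: frob_sum fin frob_scale)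
      moreover have "rank ?X \<le> 2" using rank_Fs[OF fin, of c w] n True by simp
      ultimately have "?X \<in> T" using XS by (auto simp: T_def SM_def psd_def)
      then show ?thesis by (rule hull_inc)
    next
      case False
      then have n3: "3 \<le> card supp" using n by (simp add: supp_def)
      define b where "b k = c k * l k" for k
      have supp_b: "k \<in> supp" if "k \<in> I" "b k \<noteq> 0" for k
        using that by (auto simp: supp_def b_def)
      have cardlt: "card {k\<in>I. c' k \<noteq> 0} < n" if "{k\<in>I. c' k \<noteq> 0} \<subseteq> supp - {j}" "j \<in> supp"
        for c' :: "'a \<Rightarrow> real" and j
      proof -
        have "card {k\<in>I. c' k \<noteq> 0} \<le> card (supp - {j})"
          using that fsupp by (intro card_mono) auto
        also have "\<dots> < card supp" using fsupp that by (intro card_Diff1_less)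
        finally show ?thesis using n by (simp add: supp_def)
      qed
      show ?thesis
      proof (cases "\<exists>z\<in>supp. b z = 0")
        case True
        then obtain z where z: "z \<in> supp" "b z = 0" by auto
        have "\<exists>p\<in>I. 0 < b p"
        proof (rule ccontr)
          assume "\<not> ?thesis"
          then have "(\<Sum>k\<in>I. b k) \<le> 0" by (intro sum_nonpos) auto
          then show False using V' by (simp add: b_def)
        qed
        then obtain p where p: "p \<in> I" "0 < b p" by auto
        have pz: "p \<noteq> z" using p z by auto
        have zI: "z \<in> I" using z by (simp add: supp_def)
        have psupp: "p \<in> supp" using supp_b p by auto
        define lam where "lam = min (b p) (1/2)"
        have lam: "0 < lam" "lam < 1" "lam \<le> b p" using p by (auto simp: lam_def)
        define c1 where "c1 = (\<lambda>k. 0::real)(p := c p / b p, z := c z / lam)"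
        define c2 where "c2 = (\<lambda>k. c k / (1 - lam))(z := 0, p := c p * (1 - lam / b p) / (1 - lam))"
        have bp: "b p = c p * l p" by (simp add: b_def)
        show ?thesis
        proof (rule step[OF lam(1,2), of c1 c2])
          show "\<forall>k. c k = lam * c1 k + (1 - lam) * c2 k"
            using lam p pz by (auto simp: c1_def c2_def field_simps)
          show "\<forall>k. 0 \<le> c1 k" using lam p cnn by (auto simp: c1_def)
          show "\<forall>k. 0 \<le> c2 k" using lam p cnn
            by (auto simp: c2_def intro!: divide_nonneg_pos mult_nonneg_nonneg)
          have "(\<Sum>k\<in>I. c1 k * l k) = c p / b p * l p + c z / lam * l z"
            unfolding c1_def using pz
            by (simp only: sum_upd[OF fin zI] sum_upd[OF fin p(1)]) simp
          also have "\<dots> = 1"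
          proof -
            have "c z * l z = 0" "c p * l p \<noteq> 0" using z(2) p(2) by (auto simp: b_def)
            then show ?thesis by (simp add: b_def)
          qed
          finally show "(\<Sum>k\<in>I. c1 k * l k) = 1" .
          have "(\<Sum>k\<in>I. c2 k * l k) = (\<Sum>k\<in>I. c k * l k / (1 - lam)) - c z / (1 - lam) * l z
               - c p / (1 - lam) * l p + c p * (1 - lam / b p) / (1 - lam) * l p"
            unfolding c2_def using pz
            by (simp only: sum_upd[OF fin zI] sum_upd[OF fin p(1)]) simp
          also have "\<dots> = ((\<Sum>k\<in>I. c k * l k) - b z - b p + (b p - lam)) / (1 - lam)"
          proof -
            have e1: "(\<Sum>k\<in>I. c k * l k / (1 - lam)) = (\<Sum>k\<in>I. c k * l k) / (1 - lam)"
              by (simp add: sum_divide_distrib)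
            have e2: "c p * (1 - lam / b p) * l p = b p - lam"
            proof -
              have "c p \<noteq> 0" "l p \<noteq> 0" using bp p(2) by auto
              then show ?thesis using bp by (simp add: field_simps)
            qed
            have e3: "c p * (1 - lam / b p) / (1 - lam) * l p = (b p - lam) / (1 - lam)"
              using e2 by (metis times_divide_eq_left divide_divide_eq_left mult.commute)
            show ?thesis unfolding e1 e3
              by (simp add: b_def diff_divide_distrib add_divide_distrib)
          qed
          also have "\<dots> = 1" using V' z(2) lam by simp
          finally show "(\<Sum>k\<in>I. c2 k * l k) = 1" .
          have "{k\<in>I. c1 k \<noteq> 0} \<subseteq> {p, z}" by (auto simp: c1_def)
          then have "card {k\<in>I. c1 k \<noteq> 0} \<le> card {p, z}" by (intro card_mono) auto
          also have "\<dots> \<le> 2" by (simp add: card_insert_le_m1)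
          finally show "card {k\<in>I. c1 k \<noteq> 0} < n" using n3 n by (simp add: supp_def)
          show "card {k\<in>I. c2 k \<noteq> 0} < n"
            by (rule cardlt[OF _ z(1)]) (use pz in \<open>auto simp: c2_def supp_def\<close>)
        qed
      next
        case False
        then have nz: "\<And>k. k \<in> supp \<Longrightarrow> b k \<noteq> 0" by auto
        obtain S3 where "S3 \<subseteq> supp" "card S3 = 3" using obtain_subset_with_card_n[OF n3] by metis
        then obtain x y u where xyu: "x \<in> supp" "y \<in> supp" "u \<in> supp" "x \<noteq> y" "y \<noteq> u" "x \<noteq> u"
          unfolding card_3_iff by auto
        have "\<exists>i\<in>supp. \<exists>j\<in>supp. i \<noteq> j \<and> 0 < b i * b j"
        proof -
          have "b x \<noteq> 0" "b y \<noteq> 0" "b u \<noteq> 0" using nz xyu by auto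
          then have "0 < b x * b y \<or> 0 < b y * b u \<or> 0 < b x * b u"
            by (auto simp: zero_less_mult_iff)
          then show ?thesis using xyu by blast
        qed
        then obtain i j where ij: "i \<in> supp" "j \<in> supp" "i \<noteq> j" "0 < b i * b j" by auto
        have iI: "i \<in> I" and jI: "j \<in> I" using ij by (auto simp: supp_def)
        define lam where "lam = b i / (b i + b j)"
        have lam: "0 < lam" "lam < 1"
          using ij(4) by (auto simp: lam_def zero_less_mult_iff divide_simps)
        have bi: "b i \<noteq> 0" "b i + b j \<noteq> 0" "b j \<noteq> 0" using ij(4) by (auto simp: zero_less_mult_iff)
        define c1 where "c1 = c(j := 0, i := c i / lam)"
        define c2 where "c2 = c(i := 0, j := c j / (1 - lam))"
        show ?thesis
        proof (rule step[OF lam(1,2), of c1 c2])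
          show "\<forall>k. c k = lam * c1 k + (1 - lam) * c2 k"
            using lam ij by (auto simp: c1_def c2_def field_simps)
          show "\<forall>k. 0 \<le> c1 k" using lam cnn by (auto simp: c1_def)
          show "\<forall>k. 0 \<le> c2 k" using lam cnn by (auto simp: c2_def)
          have "(\<Sum>k\<in>I. c1 k * l k) = (\<Sum>k\<in>I. c k * l k) - b j - b i + b i / lam"
            unfolding c1_def using ij(3)
            by (simp only: sum_upd[OF fin iI] sum_upd[OF fin jI]) (simp add: b_def)
          also have "\<dots> = 1" using V' bi by (simp add: lam_def)
          finally show "(\<Sum>k\<in>I. c1 k * l k) = 1" .
          have "(\<Sum>k\<in>I. c2 k * l k) = (\<Sum>k\<in>I. c k * l k) - b i - b j + b j / (1 - lam)"
            unfolding c2_def using ij(3)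
            by (simp only: sum_upd[OF fin iI] sum_upd[OF fin jI]) (simp add: b_def)
          also have "\<dots> = 1" using V' bi by (simp add: lam_def field_simps)
          finally show "(\<Sum>k\<in>I. c2 k * l k) = 1" .
          show "card {k\<in>I. c1 k \<noteq> 0} < n"
            by (rule cardlt[OF _ ij(2)]) (use ij in \<open>auto simp: c1_def supp_def\<close>)
          show "card {k\<in>I. c2 k \<noteq> 0} < n"
            by (rule cardlt[OF _ ij(1)]) (use ij in \<open>auto simp: c2_def supp_def\<close>)
        qed
      qed
    qed
  qed
qed



lemma slice_convex:
  "convex {X. sym_mat X \<and> (\<forall>M\<in>Ms. 0 \<le> frob M X) \<and> frob B X = 1 \<and> psd (X::real^'n^'n)}"
  unfolding convex_def
proof (intro ballI allI impI)
  fix x y :: "real^'n^'n" and u v :: real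
  assume x: "x \<in> {X. sym_mat X \<and> (\<forall>M\<in>Ms. 0 \<le> frob M X) \<and> frob B X = 1 \<and> psd X}"
    and y: "y \<in> {X. sym_mat X \<and> (\<forall>M\<in>Ms. 0 \<le> frob M X) \<and> frob B X = 1 \<and> psd X}"
    and uv: "0 \<le> u" "0 \<le> v" "u + v = 1"
  have p: "psd (u *\<^sub>R x + v *\<^sub>R y)" using x y uv by (auto intro: psd_add psd_scale)
  show "u *\<^sub>R x + v *\<^sub>R y \<in> {X. sym_mat X \<and> (\<forall>M\<in>Ms. 0 \<le> frob M X) \<and> frob B X = 1 \<and> psd X}"
    using x y uv p by (auto simp: frob_add frob_scale psd_def)
qed

lemma part1:
  fixes Ms :: "(real^'n^'n) set" and B :: "real^'n^'n"
  assumes "ROG (SM Ms)"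
  shows "convex hull {X. sym_mat X \<and> (\<forall>M\<in>Ms. 0 \<le> frob M X) \<and> frob B X = 1 \<and> psd X \<and> rank X \<le> 2}
          = {X. sym_mat X \<and> (\<forall>M\<in>Ms. 0 \<le> frob M X) \<and> frob B X = 1 \<and> psd X}"
    (is "convex hull ?T = ?S")
proof
  show "convex hull ?T \<subseteq> ?S"
    by (rule hull_minimal) (auto intro: slice_convex)
  show "?S \<subseteq> convex hull ?T"
  proof
    fix X assume X: "X \<in> ?S"
    then have "X \<in> SM Ms" by (auto simp: SM_def)
    then have "X \<in> convex hull (SM Ms \<inter> range outer)" using assms by (simp add: ROG_def)
    then obtain D u where D: "finite D" "D \<subseteq> SM Ms \<inter> range outer" "\<forall>x\<in>D. 0 \<le> u x"
        "sum u D = 1" "(\<Sum>v\<in>D. u v *\<^sub>R v) = X"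
      unfolding convex_hull_explicit by blast
    define w where "w v = (SOME x. v = outer x)" for v :: "real^'n^'n"
    have ow: "outer (w v) = v" if "v \<in> D" for v
    proof -
      have "\<exists>x. v = outer x" using that D(2) by auto
      then have "v = outer (w v)" unfolding w_def by (rule someI_ex)
      then show ?thesis by simp
    qed
    define c where "c v = (if v \<in> D then u v else 0)" for v
    have wS: "\<forall>k\<in>D. outer (w k) \<in> SM Ms" using ow D(2) by auto
    have sumX: "(\<Sum>k\<in>D. c k *\<^sub>R outer (w k)) = X"
      using D(5) by (simp add: c_def ow)
    have "(\<Sum>k\<in>D. c k * frob B (outer (w k))) = frob B (\<Sum>k\<in>D. c k *\<^sub>R outer (w k))"
      by (simp add: frob_sum D(1) frob_scale)
    also have "\<dots> = 1" using sumX X by simp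
    finally have V: "(\<Sum>k\<in>D. c k * frob B (outer (w k))) = 1" .
    have cnn: "\<forall>k. 0 \<le> c k" using D(3) by (simp add: c_def)
    have "(\<Sum>k\<in>D. c k *\<^sub>R outer (w k)) \<in> convex hull ?T"
      using spec[OF main_ind[OF D(1) wS, of "card {k\<in>D. c k \<noteq> 0}" B], of c] cnn V by blast
    then show "X \<in> convex hull ?T" using sumX by simp
  qed
qed



lemma frob_E:
  fixes X :: "real^'n^'n" and i :: 'n
  shows "frob (\<chi> a b. if a = i then if b = i then 1 else 0 else 0) X = X$i$i"
proof -
  have h: "((\<chi> a b. if a = i then if b = i then 1 else 0 else 0) :: real^'n^'n)$a$k * X$k$a
      = (if a = i then (if k = i then X$i$i else 0) else 0)" for a k
    by auto
  have h2: "(\<Sum>k\<in>UNIV. if a = i then if k = i then X$i$i else 0 else 0) = (if a = i then X$i$i else 0)"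
    for a by (cases "a = i") simp_all
  show ?thesis unfolding frob_expand h h2 by simp
qed

lemma sym_E: "sym_mat ((\<chi> a b. if a = i then if b = i then 1 else 0 else 0) :: real^'n^'n)"
  by (auto simp: sym_mat_def transpose_def vec_eq_iff)

lemma convex_ge_ereal: "convex {Y::real^'n^'n. r \<le> ereal (frob M0 Y)}"
proof (cases r)
  case (real s)
  show ?thesis unfolding real convex_def
  proof (intro ballI allI impI)
    fix x y :: "real^'n^'n" and u v :: real
    assume x: "x \<in> {Y. ereal s \<le> ereal (frob M0 Y)}" and y: "y \<in> {Y. ereal s \<le> ereal (frob M0 Y)}"
      and uv: "0 \<le> u" "0 \<le> v" "u + v = 1"
    have "u * s + v * s \<le> u * frob M0 x + v * frob M0 y"
      using x y uv by (intro add_mono mult_left_mono) auto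
    then show "u *\<^sub>R x + v *\<^sub>R y \<in> {Y. ereal s \<le> ereal (frob M0 Y)}"
      using uv by (simp add: frob_add frob_scale distrib_right[symmetric])
  qed
qed auto

theorem lemma5p6:
  fixes Ms :: "(real^'n^'n) set"
  assumes "\<forall>M\<in>Ms. sym_mat M"
    and "ROG (SM Ms)"
  shows "(\<forall>B. sym_mat B \<longrightarrow>
            convex hull {X. sym_mat X \<and> (\<forall>M\<in>Ms. 0 \<le> frob M X) \<and> frob B X = 1 \<and> psd X \<and> rank X \<le> 2}
          = {X. sym_mat X \<and> (\<forall>M\<in>Ms. 0 \<le> frob M X) \<and> frob B X = 1 \<and> psd X})
       \<and> (finite Ms \<longrightarrow>
            (\<forall>M0 i. sym_mat M0 \<longrightarrow>
              (let F = {X. psd X \<and> (\<forall>M\<in>Ms. 0 \<le> frob M X) \<and> X$i$i = 1} in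
                F \<noteq> {} \<longrightarrow>
                (\<exists>Xs :: nat \<Rightarrow> real^'n^'n. (\<forall>k. Xs k \<in> F \<and> rank (Xs k) \<le> 2) \<and>
                   ((\<lambda>k. ereal (frob M0 (Xs k))) \<longlongrightarrow> (INF X\<in>F. ereal (frob M0 X))) sequentially))))"
proof (intro conjI allI impI)
  fix B :: "real^'n^'n"
  show "convex hull {X. sym_mat X \<and> (\<forall>M\<in>Ms. 0 \<le> frob M X) \<and> frob B X = 1 \<and> psd X \<and> rank X \<le> 2}
          = {X. sym_mat X \<and> (\<forall>M\<in>Ms. 0 \<le> frob M X) \<and> frob B X = 1 \<and> psd X}"
    by (rule part1[OF assms(2)])
next
  fix M0 :: "real^'n^'n" and i :: 'n
  define F where "F = {X. psd X \<and> (\<forall>M\<in>Ms. 0 \<le> frob M X) \<and> X$i$i = 1}"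
  define E :: "real^'n^'n" where "E = (\<chi> a b. if a = i then if b = i then 1 else 0 else 0)"
  define T where "T = {X. sym_mat X \<and> (\<forall>M\<in>Ms. 0 \<le> frob M X) \<and> frob E X = 1 \<and> psd X \<and> rank X \<le> 2}"
  have FE: "F = {X. sym_mat X \<and> (\<forall>M\<in>Ms. 0 \<le> frob M X) \<and> frob E X = 1 \<and> psd X}"
    by (auto simp: F_def E_def frob_E psd_def)
  have FT: "F = convex hull T" unfolding FE T_def by (rule part1[OF assms(2), symmetric])
  have TF: "T \<subseteq> F" unfolding FT by (rule hull_subset)
  show "let F = {X. psd X \<and> (\<forall>M\<in>Ms. 0 \<le> frob M X) \<and> X$i$i = 1} in
                F \<noteq> {} \<longrightarrow>
                (\<exists>Xs :: nat \<Rightarrow> real^'n^'n. (\<forall>k. Xs k \<in> F \<and> rank (Xs k) \<le> 2) \<and>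
                   ((\<lambda>k. ereal (frob M0 (Xs k))) \<longlongrightarrow> (INF X\<in>F. ereal (frob M0 X))) sequentially)"
    unfolding Let_def F_def[symmetric]
  proof
    assume "F \<noteq> {}"
    then have Tne: "T \<noteq> {}" using FT by auto
    define A where "A = (\<lambda>X. ereal (frob M0 X)) ` T"
    have Ane: "A \<noteq> {}" using Tne by (simp add: A_def)
    have INFeq: "(INF X\<in>F. ereal (frob M0 X)) = Inf A"
    proof (rule antisym)
      show "(INF X\<in>F. ereal (frob M0 X)) \<le> Inf A"
        unfolding A_def using TF by (rule INF_superset_mono) simp
      have "T \<subseteq> {Y. Inf A \<le> ereal (frob M0 Y)}"
        by (auto simp: A_def intro: INF_lower)
      then have "convex hull T \<subseteq> {Y. Inf A \<le> ereal (frob M0 Y)}"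
        by (rule hull_minimal) (rule convex_ge_ereal)
      then show "Inf A \<le> (INF X\<in>F. ereal (frob M0 X))"
        unfolding FT by (auto intro: INF_greatest)
    qed
    obtain u where u: "\<forall>n. u n \<in> A" "u \<longlonglongrightarrow> Inf A" using Inf_as_limit[OF Ane] by blast
    have "\<forall>n. \<exists>X. X \<in> T \<and> u n = ereal (frob M0 X)" using u(1) by (auto simp: A_def)
    then obtain Xs where Xs: "\<forall>n. Xs n \<in> T \<and> u n = ereal (frob M0 (Xs n))" by metis
    have ueq: "(\<lambda>k. ereal (frob M0 (Xs k))) = u" using Xs by auto
    show "\<exists>Xs :: nat \<Rightarrow> real^'n^'n. (\<forall>k. Xs k \<in> F \<and> rank (Xs k) \<le> 2) \<and>
                   ((\<lambda>k. ereal (frob M0 (Xs k))) \<longlongrightarrow> (INF X\<in>F. ereal (frob M0 X))) sequentially"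
    proof (intro exI conjI allI)
      fix k show "Xs k \<in> F" using Xs TF by auto
      show "rank (Xs k) \<le> 2" using Xs by (auto simp: T_def)
    next
      show "((\<lambda>k. ereal (frob M0 (Xs k))) \<longlongrightarrow> (INF X\<in>F. ereal (frob M0 X))) sequentially"
        unfolding ueq INFeq by (rule u(2))
    qed
  qed
qed


end
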